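(* Consider a network update in which a set of flow segments, each with a traffic volume, is moved from old subpaths to new subpaths, executed by the distributed scheduling heuristic ez-Schedule described in the context, starting from an initial configuration in which, for every directed link, the sum of volumes of the segments routed over it does not exceed its capacity. Then ez-Schedule is correct: at every time during the update and as long as update operations are executed, no link carries traffic exceeding its capacity (the update is congestion-free).
   Context: Each directed link has a capacity. Each switch $s$ maintains, for each of its outgoing links $\ell$, the residual capacity of $\ell$, namely the capacity of $\ell$ minus the total volume of the segments whose currently installed forwarding entries at $s$ route over $\ell$. Each segment is updated as in \textsc{Basic-Update} (GoodToMove messages propagate backwards along the new subpath, each switch installing its new entry before forwarding GoodToMove; after the first switch switches, Removing messages propagate along the old subpath and remove old entries, which frees the corresponding volume on the old links). ez-Schedule: each segment update is assigned by the controller a priority (high if it lies on a critical cycle of the dependency graph between update operations and link capacities, medium if it lies only on non-critical cycles, low otherwise). A switch receiving GoodToMove for a segment $S$ whose new entry uses outgoing link $\ell$ installs the new entry only if the residual capacity of $\ell$ is at least the volume of $S$; if there are pending higher-priority operations on $\ell$, it installs the entry only if in addition the residual capacity minus the volume of $S$ remains sufficient for those higher-priority operations; otherwise it waits until capacity is freed by removals. Upon installing, it decreases the residual capacity of $\ell$ by the volume of $S$. *)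

theory Defs
  imports Main "HOL.Real"
begin

text \<open>A forwarding entry of segment S is identified by its kind (old/new) and its
  index i on the corresponding subpath; it is installed at switch p!i and routes
  S over link edge p i.\<close>

definition edge :: "'a list \<Rightarrow> nat \<Rightarrow> 'a \<times> 'a" where
  "edge p i = (p ! i, p ! Suc i)"

datatype priority = Low | Medium | High

fun prio_rank :: "priority \<Rightarrow> nat" where
  "prio_rank Low = 0" | "prio_rank Medium = 1" | "prio_rank High = 2"

record ('sw, 'seg) ezstate =
  inst_old :: "('seg \<times> nat) set"
  inst_new :: "('seg \<times> nat) set"
  gtm      :: "('seg \<times> nat) set"   \<comment> \<open>pending GoodToMove for S at switch newp S ! i\<close>
  rmv      :: "('seg \<times> nat) set"   \<comment> \<open>pending Removing for S at switch oldp S ! i\<close>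
  resid    :: "'sw \<times> 'sw \<Rightarrow> real" \<comment> \<open>residual capacity kept by the source switch\<close>

definition link_load ::
  "'seg set \<Rightarrow> ('seg \<Rightarrow> real) \<Rightarrow> ('seg \<Rightarrow> 'sw list) \<Rightarrow> ('seg \<Rightarrow> 'sw list)
    \<Rightarrow> ('sw, 'seg) ezstate \<Rightarrow> 'sw \<times> 'sw \<Rightarrow> real" where
  "link_load Segs vol oldp newp st l =
     (\<Sum>S\<in>Segs. vol S *
        real (card {i. (S, i) \<in> inst_old st \<and> Suc i < length (oldp S) \<and> edge (oldp S) i = l}
            + card {i. (S, i) \<in> inst_new st \<and> Suc i < length (newp S) \<and> edge (newp S) i = l}))"

text \<open>Initial configuration: all old entries installed, no new entries, the last switch
  of every new subpath has sent GoodToMove to its predecessor, residual capacities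
  are capacity minus routed volume.\<close>
definition ez_init ::
  "'seg set \<Rightarrow> ('seg \<Rightarrow> real) \<Rightarrow> ('seg \<Rightarrow> 'sw list) \<Rightarrow> ('seg \<Rightarrow> 'sw list)
    \<Rightarrow> ('sw \<times> 'sw \<Rightarrow> real) \<Rightarrow> ('sw, 'seg) ezstate" where
  "ez_init Segs vol oldp newp cap =
     (let st0 = \<lparr> inst_old = {(S, i). S \<in> Segs \<and> Suc i < length (oldp S)},
                  inst_new = {},
                  gtm = {(S, length (newp S) - 2) | S. S \<in> Segs},
                  rmv = {},
                  resid = (\<lambda>_. 0) \<rparr>
      in st0\<lparr> resid := (\<lambda>l. cap l - link_load Segs vol oldp newp st0 l) \<rparr>)"

definition pending_hi ::
  "'seg set \<Rightarrow> ('seg \<Rightarrow> 'sw list) \<Rightarrow> ('seg \<Rightarrow> priority) \<Rightarrow> ('sw, 'seg) ezstate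
    \<Rightarrow> 'seg \<Rightarrow> 'sw \<times> 'sw \<Rightarrow> 'seg set" where
  "pending_hi Segs newp prio st S l =
     {S' \<in> Segs. prio_rank (prio S) < prio_rank (prio S') \<and>
        (\<exists>i. Suc i < length (newp S') \<and> edge (newp S') i = l \<and> (S', i) \<notin> inst_new st)}"

definition can_install ::
  "'seg set \<Rightarrow> ('seg \<Rightarrow> real) \<Rightarrow> ('seg \<Rightarrow> 'sw list) \<Rightarrow> ('seg \<Rightarrow> priority)
    \<Rightarrow> ('sw, 'seg) ezstate \<Rightarrow> 'seg \<Rightarrow> 'sw \<times> 'sw \<Rightarrow> bool" where
  "can_install Segs vol newp prio st S l \<longleftrightarrow>
     vol S \<le> resid st l \<and>
     (pending_hi Segs newp prio st S l \<noteq> {} \<longrightarrow>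
        (\<Sum>S'\<in>pending_hi Segs newp prio st S l. vol S') \<le> resid st l - vol S)"

inductive ez_reach ::
  "'seg set \<Rightarrow> ('seg \<Rightarrow> real) \<Rightarrow> ('seg \<Rightarrow> 'sw list) \<Rightarrow> ('seg \<Rightarrow> 'sw list)
    \<Rightarrow> ('seg \<Rightarrow> priority) \<Rightarrow> ('sw \<times> 'sw \<Rightarrow> real) \<Rightarrow> ('sw, 'seg) ezstate \<Rightarrow> bool"
  for Segs vol oldp newp prio cap where
  init: "ez_reach Segs vol oldp newp prio cap (ez_init Segs vol oldp newp cap)"
| gtm_mid: "\<lbrakk> ez_reach Segs vol oldp newp prio cap st; S \<in> Segs; (S, i) \<in> gtm st;
      0 < i; Suc i < length (newp S); l = edge (newp S) i;
      can_install Segs vol newp prio st S l \<rbrakk> \<Longrightarrow>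
    ez_reach Segs vol oldp newp prio cap
      (st\<lparr> inst_new := insert (S, i) (inst_new st),
           resid := (resid st)(l := resid st l - vol S),
           gtm := insert (S, i - 1) (gtm st - {(S, i)}) \<rparr>)"
| gtm_first: "\<lbrakk> ez_reach Segs vol oldp newp prio cap st; S \<in> Segs; (S, 0) \<in> gtm st;
      Suc 0 < length (newp S); l = edge (newp S) 0; lo = edge (oldp S) 0;
      can_install Segs vol newp prio st S l;
      r1 = (resid st)(l := resid st l - vol S);
      r2 = (if (S, 0) \<in> inst_old st then r1(lo := r1 lo + vol S) else r1) \<rbrakk> \<Longrightarrow>
    ez_reach Segs vol oldp newp prio cap
      (st\<lparr> inst_new := insert (S, 0) (inst_new st),
           inst_old := inst_old st - {(S, 0)},
           resid := r2,
           gtm := gtm st - {(S, 0)},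
           rmv := insert (S, 1) (rmv st) \<rparr>)"
| rmv_mid: "\<lbrakk> ez_reach Segs vol oldp newp prio cap st; S \<in> Segs; (S, i) \<in> rmv st;
      Suc i < length (oldp S); lo = edge (oldp S) i;
      r = (if (S, i) \<in> inst_old st then (resid st)(lo := resid st lo + vol S) else resid st) \<rbrakk> \<Longrightarrow>
    ez_reach Segs vol oldp newp prio cap
      (st\<lparr> inst_old := inst_old st - {(S, i)},
           resid := r,
           rmv := insert (S, Suc i) (rmv st - {(S, i)}) \<rparr>)"
| rmv_last: "\<lbrakk> ez_reach Segs vol oldp newp prio cap st; (S, i) \<in> rmv st;
      length (oldp S) \<le> Suc i \<rbrakk> \<Longrightarrow>
    ez_reach Segs vol oldp newp prio cap (st\<lparr> rmv := rmv st - {(S, i)} \<rparr>)"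

end

theory Submission
  imports Defs
begin

lemma load_cong:
  "inst_old st' = inst_old st \<Longrightarrow> inst_new st' = inst_new st \<Longrightarrow>
   link_load Segs vol oldp newp st' l = link_load Segs vol oldp newp st l"
  unfolding link_load_def by simp

lemma fin_idx: "finite {i. P i \<and> Suc i < (n::nat) \<and> Q i}"
  by (rule finite_subset[of _ "{..<n}"]) auto

lemma sum_one_le:
  assumes "finite A" "S \<in> A" "\<And>x. x \<in> A \<Longrightarrow> x \<noteq> S \<Longrightarrow> f x = g x" "f S \<le> g S + (d::real)"
  shows "sum f A \<le> sum g A + d"
proof -
  have "sum f A = f S + sum f (A - {S})" using assms by (simp add: sum.remove)
  moreover have "sum g A = g S + sum g (A - {S})" using assms by (simp add: sum.remove)
  moreover have "sum f (A - {S}) = sum g (A - {S})" using assms(3) by (intro sum.cong) auto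
  ultimately show ?thesis using assms(4) by linarith
qed

lemma sum_one_eq:
  assumes "finite A" "S \<in> A" "\<And>x. x \<in> A \<Longrightarrow> x \<noteq> S \<Longrightarrow> f x = g x" "f S = g S - (d::real)"
  shows "sum f A = sum g A - d"
proof -
  have "sum f A = f S + sum f (A - {S})" using assms by (simp add: sum.remove)
  moreover have "sum g A = g S + sum g (A - {S})" using assms by (simp add: sum.remove)
  moreover have "sum f (A - {S}) = sum g (A - {S})" using assms(3) by (intro sum.cong) auto
  ultimately show ?thesis using assms(4) by linarith
qed

lemma load_ins_new:
  assumes fin: "finite Segs" and S: "S \<in> Segs" and v: "0 \<le> vol S"
    and o: "inst_old st' = inst_old st" and n: "inst_new st' = insert (S, i) (inst_new st)"
  shows "link_load Segs vol oldp newp st' l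
     \<le> link_load Segs vol oldp newp st l + (if edge (newp S) i = l then vol S else 0)"
proof -
  let ?A = "{i'. (S, i') \<in> inst_new st' \<and> Suc i' < length (newp S) \<and> edge (newp S) i' = l}"
  let ?B = "{i'. (S, i') \<in> inst_new st \<and> Suc i' < length (newp S) \<and> edge (newp S) i' = l}"
  have fB: "finite ?B" by (rule fin_idx)
  have c: "card ?A \<le> card ?B + (if edge (newp S) i = l then 1 else 0)"
  proof (cases "edge (newp S) i = l")
    case True
    have "?A \<subseteq> insert i ?B" using n by auto
    hence "card ?A \<le> card (insert i ?B)" using fB by (intro card_mono) auto
    also have "\<dots> \<le> Suc (card ?B)" by (rule card_insert_le_m1[of "Suc (card ?B)"]) (use fB in auto)
    finally show ?thesis using True by simp
  next
    case False
    have "?A = ?B" using n False by auto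
    thus ?thesis by simp
  qed
  show ?thesis
    unfolding link_load_def
  proof (rule sum_one_le[OF fin S])
    fix x assume "x \<in> Segs" "x \<noteq> S"
    thus "vol x * real (card {i. (x, i) \<in> inst_old st' \<and> Suc i < length (oldp x) \<and> edge (oldp x) i = l} +
                     card {i. (x, i) \<in> inst_new st' \<and> Suc i < length (newp x) \<and> edge (newp x) i = l}) =
          vol x * real (card {i. (x, i) \<in> inst_old st \<and> Suc i < length (oldp x) \<and> edge (oldp x) i = l} +
                     card {i. (x, i) \<in> inst_new st \<and> Suc i < length (newp x) \<and> edge (newp x) i = l})"
      using o n by simp
  next
    let ?C = "card {i. (S, i) \<in> inst_old st \<and> Suc i < length (oldp S) \<and> edge (oldp S) i = l}"
    have "real (?C + card ?A) \<le> real (?C + card ?B) + (if edge (newp S) i = l then 1 else 0)"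
      using c by (cases "edge (newp S) i = l") auto
    hence "vol S * real (?C + card ?A) \<le> vol S * (real (?C + card ?B) + (if edge (newp S) i = l then 1 else 0))"
      using v by (intro mult_left_mono)
    thus "vol S * real (card {i. (S, i) \<in> inst_old st' \<and> Suc i < length (oldp S) \<and> edge (oldp S) i = l} + card ?A)
      \<le> vol S * real (?C + card ?B) + (if edge (newp S) i = l then vol S else 0)"
      using o by (cases "edge (newp S) i = l") (auto simp: algebra_simps)
  qed
qed

lemma load_rm_old:
  assumes fin: "finite Segs" and S: "S \<in> Segs" and mem: "(S, i) \<in> inst_old st"
    and len: "Suc i < length (oldp S)"
    and o: "inst_old st' = inst_old st - {(S, i)}" and n: "inst_new st' = inst_new st"
  shows "link_load Segs vol oldp newp st' l
     = link_load Segs vol oldp newp st l - (if edge (oldp S) i = l then vol S else 0)"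
proof -
  let ?A = "{i'. (S, i') \<in> inst_old st' \<and> Suc i' < length (oldp S) \<and> edge (oldp S) i' = l}"
  let ?B = "{i'. (S, i') \<in> inst_old st \<and> Suc i' < length (oldp S) \<and> edge (oldp S) i' = l}"
  have fB: "finite ?B" by (rule fin_idx)
  have c: "real (card ?A) = real (card ?B) - (if edge (oldp S) i = l then 1 else 0)"
  proof (cases "edge (oldp S) i = l")
    case True
    have "?A = ?B - {i}" using o by auto
    moreover have "i \<in> ?B" using True mem len by auto
    ultimately have "card ?A = card ?B - 1" by simp
    moreover have "card ?B \<ge> 1" using \<open>i \<in> ?B\<close> fB
      by (metis One_nat_def Suc_leI card_gt_0_iff empty_iff)
    ultimately show ?thesis using True by (simp add: of_nat_diff)
  next
    case False
    have "?A = ?B" using o False by auto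
    thus ?thesis using False by simp
  qed
  show ?thesis
    unfolding link_load_def
  proof (rule sum_one_eq[OF fin S])
    fix x assume "x \<in> Segs" "x \<noteq> S"
    thus "vol x * real (card {i. (x, i) \<in> inst_old st' \<and> Suc i < length (oldp x) \<and> edge (oldp x) i = l} +
                     card {i. (x, i) \<in> inst_new st' \<and> Suc i < length (newp x) \<and> edge (newp x) i = l}) =
          vol x * real (card {i. (x, i) \<in> inst_old st \<and> Suc i < length (oldp x) \<and> edge (oldp x) i = l} +
                     card {i. (x, i) \<in> inst_new st \<and> Suc i < length (newp x) \<and> edge (newp x) i = l})"
      using o n by simp
  next
    show "vol S * real (card ?A + card {i. (S, i) \<in> inst_new st' \<and> Suc i < length (newp S) \<and> edge (newp S) i = l})
      = vol S * real (card ?B + card {i. (S, i) \<in> inst_new st \<and> Suc i < length (newp S) \<and> edge (newp S) i = l})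
        - (if edge (oldp S) i = l then vol S else 0)"
    proof -
      let ?X = "card {i. (S, i) \<in> inst_new st \<and> Suc i < length (newp S) \<and> edge (newp S) i = l}"
      have e: "real (card ?A + ?X) = real (card ?B + ?X) - (if edge (oldp S) i = l then 1 else 0)"
        using c by simp
      have "vol S * real (card ?A + ?X) = vol S * real (card ?B + ?X) - vol S * (if edge (oldp S) i = l then 1 else 0)"
        unfolding e by (simp add: right_diff_distrib)
      thus ?thesis using n by simp
    qed
  qed
qed


lemma ez_inv:
  assumes fin: "finite Segs"
    and vnn: "\<And>S. S \<in> Segs \<Longrightarrow> 0 \<le> vol S"
    and nL: "\<And>S i. S \<in> Segs \<Longrightarrow> Suc i < length (newp S) \<Longrightarrow> edge (newp S) i \<in> Links"
    and initc: "\<And>l. l \<in> Links \<Longrightarrow>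
           link_load Segs vol oldp newp (ez_init Segs vol oldp newp cap) l \<le> cap l"
    and r: "ez_reach Segs vol oldp newp prio cap st"
  shows "(\<forall>l. link_load Segs vol oldp newp st l + resid st l \<le> cap l)
       \<and> (\<forall>l\<in>Links. 0 \<le> resid st l)
       \<and> inst_old st \<subseteq> {(S, i). S \<in> Segs \<and> Suc i < length (oldp S)}"
  using r
proof (induction rule: ez_reach.induct)
  case init
  let ?st0 = "\<lparr> inst_old = {(S, i). S \<in> Segs \<and> Suc i < length (oldp S)},
                  inst_new = {},
                  gtm = {(S, length (newp S) - 2) | S. S \<in> Segs},
                  rmv = {},
                  resid = (\<lambda>_. 0) \<rparr> :: ('b, 'a) ezstate"
  have e: "ez_init Segs vol oldp newp cap = ?st0\<lparr> resid := (\<lambda>l. cap l - link_load Segs vol oldp newp ?st0 l) \<rparr>"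
    unfolding ez_init_def Let_def by simp
  have ld: "\<And>l. link_load Segs vol oldp newp (ez_init Segs vol oldp newp cap) l = link_load Segs vol oldp newp ?st0 l"
    by (rule load_cong) (simp_all add: e)
  show ?case
  proof (intro conjI allI ballI)
    fix l show "link_load Segs vol oldp newp (ez_init Segs vol oldp newp cap) l
      + resid (ez_init Segs vol oldp newp cap) l \<le> cap l" unfolding ld by (simp add: e)
  next
    fix l assume "l \<in> Links"
    from initc[OF this] show "0 \<le> resid (ez_init Segs vol oldp newp cap) l" unfolding ld by (simp add: e)
  next
    show "inst_old (ez_init Segs vol oldp newp cap) \<subseteq> {(S, i). S \<in> Segs \<and> Suc i < length (oldp S)}"
      by (simp add: e)
  qed
next
  case (gtm_mid st S i l)
  let ?st' = "st\<lparr> inst_new := insert (S, i) (inst_new st),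
           resid := (resid st)(l := resid st l - vol S),
           gtm := insert (S, i - 1) (gtm st - {(S, i)}) \<rparr>"
  have v: "0 \<le> vol S" using vnn gtm_mid by auto
  have lL: "l \<in> Links" using nL gtm_mid by auto
  have ci: "vol S \<le> resid st l" using gtm_mid(7) unfolding can_install_def by auto
  have ld: "\<And>l'. link_load Segs vol oldp newp ?st' l' \<le> link_load Segs vol oldp newp st l' + (if l = l' then vol S else 0)"
    using load_ins_new[where Segs=Segs and S=S and vol=vol and st'="?st'" and st=st and i=i and oldp=oldp and newp=newp, OF fin gtm_mid(2) v] gtm_mid(6) by simp
  show ?case
  proof (intro conjI allI ballI)
    fix l' show "link_load Segs vol oldp newp ?st' l' + resid ?st' l' \<le> cap l'"
    proof -
      have h: "link_load Segs vol oldp newp st l' + resid st l' \<le> cap l'" using conjunct1[OF gtm_mid.IH] by (rule spec)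
      have rr: "resid ?st' l' = resid st l' - (if l = l' then vol S else 0)" by simp
      show ?thesis using ld[of l'] h rr by linarith
    qed
  next
    fix l' assume lk: "l' \<in> Links"
    have h: "0 \<le> resid st l'" using conjunct1[OF conjunct2[OF gtm_mid.IH]] lk by (rule bspec)
    have rr: "resid ?st' l' = resid st l' - (if l = l' then vol S else 0)" by simp
    show "0 \<le> resid ?st' l'" using h rr ci by (cases "l = l'") simp_all
  next
    show "inst_old ?st' \<subseteq> {(S, i). S \<in> Segs \<and> Suc i < length (oldp S)}" using gtm_mid.IH by simp
  qed
next
  case (gtm_first st S l lo r1 r2)
  let ?stA = "st\<lparr> inst_new := insert (S, 0) (inst_new st) \<rparr>"
  let ?st' = "st\<lparr> inst_new := insert (S, 0) (inst_new st),
           inst_old := inst_old st - {(S, 0)},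
           resid := r2,
           gtm := gtm st - {(S, 0)},
           rmv := insert (S, 1) (rmv st) \<rparr>"
  have v: "0 \<le> vol S" using vnn gtm_first by auto
  have lL: "l \<in> Links" using nL gtm_first by auto
  have ci: "vol S \<le> resid st l" using gtm_first(7) unfolding can_install_def by auto
  have ldA: "\<And>l'. link_load Segs vol oldp newp ?stA l' \<le> link_load Segs vol oldp newp st l' + (if l = l' then vol S else 0)"
    using load_ins_new[where Segs=Segs and S=S and vol=vol and st'="?stA" and st=st and i=0 and oldp=oldp and newp=newp, OF fin gtm_first(2) v] gtm_first(5) by simp
  have ld2: "\<And>l'. link_load Segs vol oldp newp ?st' l' = link_load Segs vol oldp newp ?stA l'
      - (if (S, 0) \<in> inst_old st \<and> lo = l' then vol S else 0)"
  proof -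
    fix l'
    show "link_load Segs vol oldp newp ?st' l' = link_load Segs vol oldp newp ?stA l'
      - (if (S, 0) \<in> inst_old st \<and> lo = l' then vol S else 0)"
    proof (cases "(S, 0) \<in> inst_old st")
      case True
      hence len: "Suc 0 < length (oldp S)" using gtm_first.IH by auto
      show ?thesis using load_rm_old[where Segs=Segs and S=S and vol=vol and st'="?st'" and st="?stA" and i=0 and oldp=oldp and newp=newp and l=l', OF fin gtm_first(2)] True len gtm_first(6)
        by simp
    next
      case False
      hence eo: "inst_old st - {(S, 0)} = inst_old st" by auto
      have "link_load Segs vol oldp newp ?st' l' = link_load Segs vol oldp newp ?stA l'"
        by (rule load_cong) (simp_all add: eo)
      thus ?thesis using False by simp
    qed
  qed
  show ?case
  proof (intro conjI allI ballI)
    fix l' show "link_load Segs vol oldp newp ?st' l' + resid ?st' l' \<le> cap l'"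
    proof -
      have h: "link_load Segs vol oldp newp st l' + resid st l' \<le> cap l'" using conjunct1[OF gtm_first.IH] by (rule spec)
      have rr: "resid ?st' l' = resid st l' - (if l = l' then vol S else 0) + (if (S, 0) \<in> inst_old st \<and> lo = l' then vol S else 0)"
        using gtm_first(8,9) by (cases "l = l'"; cases "lo = l'") simp_all
      show ?thesis using ld2[of l'] ldA[of l'] h rr by linarith
    qed
  next
    fix l' assume lk: "l' \<in> Links"
    have h: "0 \<le> resid st l'" using conjunct1[OF conjunct2[OF gtm_first.IH]] lk by (rule bspec)
    have rr: "resid ?st' l' = resid st l' - (if l = l' then vol S else 0) + (if (S, 0) \<in> inst_old st \<and> lo = l' then vol S else 0)"
      using gtm_first(8,9) by (cases "l = l'"; cases "lo = l'") simp_all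
    show "0 \<le> resid ?st' l'" using h rr ci v by (cases "l = l'"; cases "(S, 0) \<in> inst_old st \<and> lo = l'") simp_all
  next
    show "inst_old ?st' \<subseteq> {(S, i). S \<in> Segs \<and> Suc i < length (oldp S)}" using gtm_first.IH by auto
  qed
next
  case (rmv_mid st S i lo r)
  let ?st' = "st\<lparr> inst_old := inst_old st - {(S, i)},
           resid := r,
           rmv := insert (S, Suc i) (rmv st - {(S, i)}) \<rparr>"
  have v: "0 \<le> vol S" using vnn rmv_mid by auto
  have ld2: "\<And>l'. link_load Segs vol oldp newp ?st' l' = link_load Segs vol oldp newp st l'
      - (if (S, i) \<in> inst_old st \<and> lo = l' then vol S else 0)"
  proof -
    fix l'
    show "link_load Segs vol oldp newp ?st' l' = link_load Segs vol oldp newp st l'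
      - (if (S, i) \<in> inst_old st \<and> lo = l' then vol S else 0)"
    proof (cases "(S, i) \<in> inst_old st")
      case True
      show ?thesis using load_rm_old[where Segs=Segs and S=S and vol=vol and st'="?st'" and st=st and i=i and oldp=oldp and newp=newp and l=l', OF fin rmv_mid(2)] True rmv_mid(4,5)
        by simp
    next
      case False
      hence eo: "inst_old st - {(S, i)} = inst_old st" by auto
      have "link_load Segs vol oldp newp ?st' l' = link_load Segs vol oldp newp st l'"
        by (rule load_cong) (simp_all add: eo)
      thus ?thesis using False by simp
    qed
  qed
  show ?case
  proof (intro conjI allI ballI)
    fix l' show "link_load Segs vol oldp newp ?st' l' + resid ?st' l' \<le> cap l'"
    proof -
      have h: "link_load Segs vol oldp newp st l' + resid st l' \<le> cap l'" using conjunct1[OF rmv_mid.IH] by (rule spec)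
      have rr: "resid ?st' l' = resid st l' + (if (S, i) \<in> inst_old st \<and> lo = l' then vol S else 0)"
        using rmv_mid(6) by (cases "lo = l'") simp_all
      show ?thesis using ld2[of l'] h rr by linarith
    qed
  next
    fix l' assume lk: "l' \<in> Links"
    have h: "0 \<le> resid st l'" using conjunct1[OF conjunct2[OF rmv_mid.IH]] lk by (rule bspec)
    have rr: "resid ?st' l' = resid st l' + (if (S, i) \<in> inst_old st \<and> lo = l' then vol S else 0)"
      using rmv_mid(6) by (cases "lo = l'") simp_all
    show "0 \<le> resid ?st' l'" using h rr v by (cases "(S, i) \<in> inst_old st \<and> lo = l'") simp_all
  next
    show "inst_old ?st' \<subseteq> {(S, i). S \<in> Segs \<and> Suc i < length (oldp S)}" using rmv_mid.IH by auto
  qed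
next
  case (rmv_last st S i)
  let ?st' = "st\<lparr> rmv := rmv st - {(S, i)} \<rparr>"
  have a: "\<And>l'. link_load Segs vol oldp newp ?st' l' = link_load Segs vol oldp newp st l'"
    by (rule load_cong) simp_all
  have b: "resid ?st' = resid st" "inst_old ?st' = inst_old st" by simp_all
  show ?case using rmv_last.IH unfolding a b .
qed

theorem theorem3:
  fixes Segs :: "'seg set" and vol :: "'seg \<Rightarrow> real"
    and oldp newp :: "'seg \<Rightarrow> 'sw list" and prio :: "'seg \<Rightarrow> priority"
    and cap :: "'sw \<times> 'sw \<Rightarrow> real" and Links :: "('sw \<times> 'sw) set"
  assumes "finite Segs"
    and "\<And>S. S \<in> Segs \<Longrightarrow> 0 \<le> vol S"
    and "\<And>S. S \<in> Segs \<Longrightarrow> 2 \<le> length (oldp S) \<and> 2 \<le> length (newp S)"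
    and "\<And>S. S \<in> Segs \<Longrightarrow> hd (oldp S) = hd (newp S) \<and> last (oldp S) = last (newp S)"
    and "\<And>S i. S \<in> Segs \<Longrightarrow> Suc i < length (oldp S) \<Longrightarrow> edge (oldp S) i \<in> Links"
    and "\<And>S i. S \<in> Segs \<Longrightarrow> Suc i < length (newp S) \<Longrightarrow> edge (newp S) i \<in> Links"
    and "\<And>l. l \<in> Links \<Longrightarrow>
           link_load Segs vol oldp newp (ez_init Segs vol oldp newp cap) l \<le> cap l"
    and "ez_reach Segs vol oldp newp prio cap st"
  shows "\<forall>l\<in>Links. link_load Segs vol oldp newp st l \<le> cap l"
proof
  fix l assume l: "l \<in> Links"
  have i: "(\<forall>l. link_load Segs vol oldp newp st l + resid st l \<le> cap l) \<and> (\<forall>l\<in>Links. 0 \<le> resid st l)"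
    using ez_inv[of Segs vol newp Links oldp cap prio st] assms by blast
  hence "link_load Segs vol oldp newp st l + resid st l \<le> cap l" "0 \<le> resid st l" using l by (blast, blast)
  thus "link_load Segs vol oldp newp st l \<le> cap l" by linarith
qed

end
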